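(* Let $P_n$ be the path graph with $n$ nodes labeled consecutively from one end to the other as $1,2,\dots,n$. Then the sequence $C=(\theta_{12},\theta_{13},\dots,\theta_{1n})$ of communicability angles between node $1$ and the other nodes is monotonic.
   Context: For a graph with adjacency matrix $A$, the communicability is $G_{pq}=(e^{A})_{pq}$ and the communicability angle $\theta_{pq}\in[0^\circ,90^\circ]$ between nodes $p,q$ is defined by $\cos\theta_{pq}=G_{pq}/\sqrt{G_{pp}G_{qq}}$. *)

theory Defs
  imports Complex_Main
begin

text \<open>Square matrices of size n with rows/columns indexed by 1..n, represented
  as functions nat => nat => real (entries outside 1..n are irrelevant).\<close>

definition path_adj :: "nat \<Rightarrow> nat \<Rightarrow> nat \<Rightarrow> real" where
  "path_adj n i j = (if i \<in> {1..n} \<and> j \<in> {1..n} \<and> (i = j + 1 \<or> j = i + 1) then 1 else 0)"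

fun mat_pow :: "nat \<Rightarrow> (nat \<Rightarrow> nat \<Rightarrow> real) \<Rightarrow> nat \<Rightarrow> nat \<Rightarrow> nat \<Rightarrow> real" where
  "mat_pow n A 0 = (\<lambda>i j. if i = j then 1 else 0)"
| "mat_pow n A (Suc k) = (\<lambda>i j. \<Sum>l\<in>{1..n}. mat_pow n A k i l * A l j)"

definition mat_exp :: "nat \<Rightarrow> (nat \<Rightarrow> nat \<Rightarrow> real) \<Rightarrow> nat \<Rightarrow> nat \<Rightarrow> real" where
  "mat_exp n A p q = (\<Sum>k. mat_pow n A k p q / fact k)"

definition path_comm :: "nat \<Rightarrow> nat \<Rightarrow> nat \<Rightarrow> real" where
  "path_comm n p q = mat_exp n (path_adj n) p q"

definition path_comm_angle :: "nat \<Rightarrow> nat \<Rightarrow> nat \<Rightarrow> real" where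
  "path_comm_angle n p q =
     arccos (path_comm n p q / sqrt (path_comm n p p * path_comm n q q))"

end

theory Submission imports Defs "HOL-Analysis.Complex_Transcendental" begin

abbreviation Pw :: "nat \<Rightarrow> nat \<Rightarrow> nat \<Rightarrow> nat \<Rightarrow> real" where
  "Pw n k p q \<equiv> mat_pow n (path_adj n) k p q"

lemma adj_bounds: "0 \<le> path_adj n i j" "path_adj n i j \<le> 1"
  by (auto simp: path_adj_def)

lemma adj_colsum: "(\<Sum>l\<in>{1..n}. path_adj n l q) \<le> 2"
proof -
  have "(\<Sum>l\<in>{1..n}. path_adj n l q) \<le> (\<Sum>l\<in>{1..n}. (if l = q - 1 then 1 else 0) + (if l = q + 1 then 1 else 0))"
    by (rule sum_mono) (auto simp: path_adj_def)
  also have "\<dots> = (\<Sum>l\<in>{1..n}. (if l = q - 1 then 1 else 0)) + (\<Sum>l\<in>{1..n}. (if l = q + 1 then 1 else 0))"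
    by (rule sum.distrib)
  also have "\<dots> \<le> 1 + 1"
    by (intro add_mono) (simp_all add: sum.delta')
  finally show ?thesis by simp
qed

lemma pow_nonneg: "0 \<le> Pw n k p q"
  by (induction k arbitrary: q) (auto intro!: sum_nonneg mult_nonneg_nonneg adj_bounds)

lemma pow_le: "Pw n k p q \<le> 2 ^ k"
proof (induction k arbitrary: q)
  case 0 then show ?case by simp
next
  case (Suc k)
  have "Pw n (Suc k) p q = (\<Sum>l\<in>{1..n}. Pw n k p l * path_adj n l q)" by simp
  also have "\<dots> \<le> (\<Sum>l\<in>{1..n}. 2^k * path_adj n l q)"
    by (intro sum_mono mult_right_mono Suc adj_bounds)
  also have "\<dots> = 2^k * (\<Sum>l\<in>{1..n}. path_adj n l q)" by (simp add: sum_distrib_left)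
  also have "\<dots> \<le> 2^k * 2" by (intro mult_left_mono adj_colsum) simp
  finally show ?case by simp
qed

lemma pow_parity: "odd (k + p + q) \<Longrightarrow> Pw n k p q = 0"
proof (induction k arbitrary: q)
  case 0 then show ?case by auto
next
  case (Suc k)
  have "\<forall>l\<in>{1..n}. Pw n k p l * path_adj n l q = 0"
  proof
    fix l assume "l \<in> {1..n}"
    show "Pw n k p l * path_adj n l q = 0"
    proof (cases "path_adj n l q = 0")
      case False
      then have "q = l + 1 \<or> l = q + 1" by (auto simp: path_adj_def split: if_splits)
      then have "odd (k + p + l)" using Suc.prems by auto
      then show ?thesis using Suc.IH by simp
    qed simp
  qed
  then have "(\<Sum>l\<in>{1..n}. Pw n k p l * path_adj n l q) = 0" by (rule sum.neutral)
  then show ?case by simp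
qed

lemma pow_out: "q \<notin> {1..n} \<Longrightarrow> q \<noteq> p \<Longrightarrow> Pw n k p q = 0"
  by (cases k) (auto simp: path_adj_def)

lemma pow1: assumes "p \<in> {1..n}" shows "Pw n 1 p q = path_adj n p q"
proof -
  have "Pw n 1 p q = (\<Sum>l\<in>{1..n}. (if p = l then 1 else 0) * path_adj n l q)"
    by (simp only: One_nat_def mat_pow.simps)
  also have "\<dots> = (\<Sum>l\<in>{1..n}. (if p = l then path_adj n l q else 0))"
    by (intro sum.cong refl) simp
  also have "\<dots> = path_adj n p q" using assms by (simp add: sum.delta)
  finally show ?thesis .
qed

lemma sum_if_delta1: "(q::nat) \<in> {1..n} \<Longrightarrow> (\<Sum>l\<in>{1..n}. if l = q - 1 \<and> 2 \<le> q then f l else (0::real)) = (if 2 \<le> q then f (q - 1) else 0)"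
  by (cases "2 \<le> q") (auto simp: sum.delta')

lemma sum_if_delta2: "(q::nat) \<in> {1..n} \<Longrightarrow> (\<Sum>l\<in>{1..n}. if l = q + 1 \<and> q + 1 \<le> n then f l else (0::real)) = (if q + 1 \<le> n then f (q + 1) else 0)"
  by (cases "q + 1 \<le> n") (auto simp: sum.delta')

lemma pow_rec:
  assumes p: "p \<in> {1..n}" and q: "q \<in> {1..n}"
  shows "Pw n (Suc k) p q = Pw n k p (q - 1) + Pw n k p (q + 1)"
proof -
  have A: "path_adj n l q = (if l = q - 1 \<and> 2 \<le> q then 1 else 0) + (if l = q + 1 \<and> q + 1 \<le> n then 1 else 0)"
    if "l \<in> {1..n}" for l using that q by (auto simp: path_adj_def)
  have "Pw n (Suc k) p q = (\<Sum>l\<in>{1..n}. Pw n k p l * path_adj n l q)" by simp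
  also have "\<dots> = (\<Sum>l\<in>{1..n}. (if l = q - 1 \<and> 2 \<le> q then Pw n k p l else 0) + (if l = q + 1 \<and> q + 1 \<le> n then Pw n k p l else 0))"
    by (intro sum.cong refl) (simp add: A)
  also have "\<dots> = (if 2 \<le> q then Pw n k p (q - 1) else 0) + (if q + 1 \<le> n then Pw n k p (q + 1) else 0)"
    using q by (simp only: sum.distrib sum_if_delta1 sum_if_delta2)
  also have "\<dots> = Pw n k p (q - 1) + Pw n k p (q + 1)"
  proof -
    have "Pw n k p (q - 1) = 0" if "\<not> 2 \<le> q" using that p q by (intro pow_out) auto
    moreover have "Pw n k p (q + 1) = 0" if "\<not> q + 1 \<le> n" using that p q by (intro pow_out) auto
    ultimately show ?thesis by auto
  qed
  finally show ?thesis .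
qed

declare mat_pow.simps(2)[simp del]

lemma pow_dist: "1 \<le> n \<Longrightarrow> k + 1 < q \<Longrightarrow> Pw n k 1 q = 0"
proof (induction k arbitrary: q)
  case 0 then show ?case by simp
next
  case (Suc k)
  show ?case
  proof (cases "q \<in> {1..n}")
    case True
    then have "Pw n (Suc k) 1 q = Pw n k 1 (q - 1) + Pw n k 1 (q + 1)"
      using Suc.prems by (intro pow_rec) auto
    then show ?thesis using Suc by simp
  next
    case False then show ?thesis using Suc.prems by (intro pow_out) auto
  qed
qed

lemma pow_pos: "k + 1 \<le> n \<Longrightarrow> 1 \<le> Pw n k 1 (k + 1)"
proof (induction k)
  case 0 then show ?case by simp
next
  case (Suc k)
  have "Pw n (Suc k) 1 (Suc k + 1) = Pw n k 1 (k + 1) + Pw n k 1 (k + 3)"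
    using Suc.prems pow_rec[of 1 n "k + 2" k] by (simp add: numeral_eq_Suc)
  then show ?case using Suc pow_nonneg[of n k 1 "k+3"] by simp
qed

fun B :: "nat \<Rightarrow> nat \<Rightarrow> real" where
  "B 0 q = (if q = 1 then 1 else 0)"
| "B (Suc k) q = (if q = 0 then 0 else B k (q - 1) + B k (q + 1))"

lemma B_nonneg: "0 \<le> B k q"
  by (induction k arbitrary: q) auto

lemma pow_B: "1 \<le> n \<Longrightarrow> Pw n k 1 q \<le> B k q"
proof (induction k arbitrary: q)
  case 0 then show ?case by simp
next
  case (Suc k)
  show ?case
  proof (cases "q \<in> {1..n}")
    case True
    then have "Pw n (Suc k) 1 q = Pw n k 1 (q - 1) + Pw n k 1 (q + 1)"
      using Suc.prems by (intro pow_rec) auto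
    then show ?thesis using Suc True by (simp add: add_mono)
  next
    case False then show ?thesis using Suc.prems B_nonneg[of "Suc k" q]
      by (subst pow_out) auto
  qed
qed

lemma exp2_sums: "(\<lambda>k. 2 ^ k / fact k :: real) sums exp 2"
  using exp_converges[of "2::real"] by (simp add: real_scaleR_def divide_inverse mult.commute)

lemma summ: "summable (\<lambda>k. Pw n k p q / fact k)"
proof (rule summable_comparison_test[OF _ sums_summable[OF exp2_sums]])
  show "\<exists>N. \<forall>k\<ge>N. norm (Pw n k p q / fact k) \<le> 2 ^ k / fact k"
    using pow_le pow_nonneg by (auto intro!: divide_right_mono)
qed

lemma tail_bound:
  fixes f :: "nat \<Rightarrow> real"
  assumes "summable f" "\<And>k. k \<ge> N \<Longrightarrow> f k \<le> 2 ^ k / fact k"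
  shows "suminf f \<le> sum f {..<N} + (exp 2 - (\<Sum>k<N. 2 ^ k / fact k))"
proof -
  have g: "(\<lambda>i. 2 ^ (i + N) / fact (i + N) :: real) sums (exp 2 - (\<Sum>k<N. 2 ^ k / fact k))"
    using exp2_sums sums_iff_shift[of "\<lambda>k. 2 ^ k / fact k :: real" N] by simp
  have "suminf f = (\<Sum>i. f (i + N)) + sum f {..<N}"
    using assms(1) by (rule suminf_split_initial_segment)
  also have "(\<Sum>i. f (i + N)) \<le> (exp 2 - (\<Sum>k<N. 2 ^ k / fact k))"
  proof (rule sums_le[OF _ _ g])
    show "(\<lambda>i. f (i + N)) sums (\<Sum>i. f (i + N))"
      using assms(1) by (simp add: summable_iff_shift summable_sums)
  qed (simp add: assms(2))
  finally show ?thesis by simp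
qed

abbreviation Gm :: "nat \<Rightarrow> nat \<Rightarrow> nat \<Rightarrow> real" where
  "Gm n p q \<equiv> mat_exp n (path_adj n) p q"

lemma Gm_nonneg: "0 \<le> Gm n p q"
  unfolding mat_exp_def by (intro suminf_nonneg summ) (simp add: pow_nonneg)

lemma Gm_ge_partial: "(\<Sum>k<N. Pw n k p q / fact k) \<le> Gm n p q"
  unfolding mat_exp_def by (intro sum_le_suminf summ) (simp_all add: pow_nonneg)

lemma Gm_zero: "1 \<le> n \<Longrightarrow> Gm n 1 0 = 0"
  unfolding mat_exp_def by (subst pow_out) auto

lemma Gm_top: "1 \<le> n \<Longrightarrow> Gm n 1 (n + 1) = 0"
  unfolding mat_exp_def by (subst pow_out) auto

lemma fact_aux:
  fixes a P :: real
  assumes "a \<le> real (Suc k)" "0 \<le> P"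
  shows "a * (P / fact (Suc k)) \<le> P / fact k"
proof -
  have "a * P \<le> real (Suc k) * P" using assms by (intro mult_right_mono)
  then have "a * P / fact (Suc k) \<le> real (Suc k) * P / fact (Suc k)"
    by (intro divide_right_mono) auto
  also have "\<dots> = P / fact k"
  proof -
    have "fact (Suc k) = real (Suc k) * (fact k :: real)" by (simp add: fact_Suc)
    moreover have "(fact k :: real) > 0" by simp
    ultimately show ?thesis by (simp del: of_nat_Suc fact_Suc)
  qed
  finally show ?thesis by simp
qed

lemma Gm_rel:
  assumes n: "1 \<le> n" and q: "q \<in> {1..n}"
  shows "(real q - 1) * Gm n 1 q \<le> Gm n 1 (q - 1) + Gm n 1 (q + 1)"
proof -
  have eq: "Pw n (Suc k) 1 q / fact k = Pw n k 1 (q - 1) / fact k + Pw n k 1 (q + 1) / fact k" for k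
    using pow_rec[of 1 n q k] n q by (simp add: add_divide_distrib)
  have sT: "summable (\<lambda>k. Pw n (Suc k) 1 q / fact k)"
    unfolding eq by (intro summable_add summ)
  have T: "(\<Sum>k. Pw n (Suc k) 1 q / fact k) = Gm n 1 (q - 1) + Gm n 1 (q + 1)"
    unfolding eq mat_exp_def by (intro suminf_add[symmetric] summ)
  have sh: "(\<Sum>k. Pw n (Suc k) 1 q / fact (Suc k)) = Gm n 1 q - Pw n 0 1 q"
    unfolding mat_exp_def using suminf_split_initial_segment[OF summ[of n 1 q], of 1] by simp
  have z: "(real q - 1) * Pw n 0 1 q = 0" by simp
  have "(real q - 1) * Gm n 1 q = (\<Sum>k. (real q - 1) * (Pw n (Suc k) 1 q / fact (Suc k)))"
  proof -
    have s1: "summable (\<lambda>k. Pw n (Suc k) 1 q / fact (Suc k))"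
      using summable_ignore_initial_segment[OF summ[of n 1 q], of 1] by simp
    have "(real q - 1) * Gm n 1 q = (real q - 1) * (\<Sum>k. Pw n (Suc k) 1 q / fact (Suc k))"
    proof -
      have "Gm n 1 q = (\<Sum>k. Pw n (Suc k) 1 q / fact (Suc k)) + Pw n 0 1 q" using sh by linarith
      then show ?thesis by (simp only: distrib_left z add_0_right)
    qed
    also have "\<dots> = (\<Sum>k. (real q - 1) * (Pw n (Suc k) 1 q / fact (Suc k)))"
      by (rule suminf_mult[OF s1, symmetric])
    finally show ?thesis .
  qed
  also have "\<dots> \<le> (\<Sum>k. Pw n (Suc k) 1 q / fact k)"
  proof (rule suminf_le)
    fix k
    show "(real q - 1) * (Pw n (Suc k) 1 q / fact (Suc k)) \<le> Pw n (Suc k) 1 q / fact k"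
    proof (cases "Suc k + 1 < q")
      case True then show ?thesis using pow_dist[OF n True] by simp
    next
      case False
      then have "real q - 1 \<le> real (Suc k)" by simp
      moreover have "0 \<le> Pw n (Suc k) 1 q" by (rule pow_nonneg)
      ultimately show ?thesis by (rule fact_aux)
    qed
  next
    show "summable (\<lambda>k. (real q - 1) * (Pw n (Suc k) 1 q / fact (Suc k)))"
      using summable_mult[OF summable_ignore_initial_segment[OF summ[of n 1 q], of 1], of "real q - 1"] by simp
  qed (rule sT)
  finally show ?thesis using T by simp
qed

lemma E_alg:
  fixes x a b c :: real
  assumes x: "1 \<le> x" and c: "0 \<le> c"
    and IH: "((x + 1)^2 - 1) * c \<le> (x + 1) * b" and R: "x * b \<le> a + c"
  shows "(x^2 - 1) * b \<le> x * a"
proof -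
  have "(x * x + x) * c \<le> (x * x + 2 * x) * c"
    using x c by (intro mult_right_mono) auto
  then have "(x + 1) * (x * c) \<le> ((x + 1)^2 - 1) * c"
    by (simp add: power2_eq_square algebra_simps)
  then have "(x + 1) * (x * c) \<le> (x + 1) * b" using IH by linarith
  then have xc: "x * c \<le> b" using x by (simp add: mult_le_cancel_left_pos)
  have "x * (x * b) \<le> x * (a + c)" using R x by (intro mult_left_mono) auto
  then show ?thesis using xc by (simp add: power2_eq_square algebra_simps)
qed

lemma Gm_E:
  assumes "1 \<le> n" "1 \<le> q" "q \<le> n"
  shows "(real q ^ 2 - 1) * Gm n 1 (q + 1) \<le> real q * Gm n 1 q"
  using assms
proof (induction "n - q" arbitrary: q)
  case 0
  then have "q = n" by simp
  then show ?case using Gm_top[OF \<open>1 \<le> n\<close>] Gm_nonneg[of n 1 q] 0 by simp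
next
  case (Suc d)
  have IH: "(real (q + 1) ^ 2 - 1) * Gm n 1 (q + 1 + 1) \<le> real (q + 1) * Gm n 1 (q + 1)"
    using Suc by (intro Suc.hyps(1)) auto
  have R: "(real (q + 1) - 1) * Gm n 1 (q + 1) \<le> Gm n 1 (q + 1 - 1) + Gm n 1 (q + 1 + 1)"
    using Suc by (intro Gm_rel) auto
  show ?case
    using E_alg[of "real q" "Gm n 1 (q + 1 + 1)" "Gm n 1 (q + 1)" "Gm n 1 q"] IH R Suc.prems Gm_nonneg
    by (simp add: add.commute)
qed

lemma exp2_le: "exp (2::real) \<le> 73984 / 10000"
proof -
  have "exp (2::real) = exp 1 * exp 1" by (simp add: exp_add[symmetric])
  also have "\<dots> \<le> (272/100) * (272/100)"
    using e_less_272 by (intro mult_mono) auto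
  finally show ?thesis by simp
qed

lemma head_B:
  assumes "1 \<le> n"
  shows "(\<Sum>k<N. Pw n k 1 q / fact k) \<le> (\<Sum>k<N. B k q / fact k)"
  using pow_B[OF assms] by (intro sum_mono divide_right_mono) auto

lemma bound_B:
  assumes "1 \<le> n"
  shows "Gm n 1 q \<le> (\<Sum>k<7. B k q / fact k) + (exp 2 - (\<Sum>k<7. 2 ^ k / fact k))"
proof -
  have "Gm n 1 q \<le> (\<Sum>k<7. Pw n k 1 q / fact k) + (exp 2 - (\<Sum>k<7. 2 ^ k / fact k))"
    unfolding mat_exp_def using pow_le pow_nonneg
    by (intro tail_bound summ) (auto intro: divide_right_mono)
  then show ?thesis using head_B[OF assms, where N=7 and q=q] by linarith
qed

lemma S2_le: "1 \<le> n \<Longrightarrow> Gm n 1 2 \<le> 3/2"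
  using bound_B[of n 2] exp2_le by (simp add: eval_nat_numeral fact_Suc)

lemma S1_le: "1 \<le> n \<Longrightarrow> Gm n 1 1 \<le> 2"
  using bound_B[of n 1] exp2_le by (simp add: eval_nat_numeral fact_Suc)

lemma sum4: "(\<Sum>k<(4::nat). f k) = f 0 + f 1 + f 2 + (f 3 :: real)"
  by (simp add: eval_nat_numeral)

lemma sum3: "(\<Sum>k<(3::nat). f k) = f 0 + f 1 + (f 2 :: real)"
  by (simp add: eval_nat_numeral)

lemma P2_unfold: "Pw n 2 p q = (\<Sum>l\<in>{1..n}. Pw n 1 p l * path_adj n l q)"
proof -
  have "(2::nat) = Suc 1" by simp
  then show ?thesis by (simp only: mat_pow.simps(2)[of n "path_adj n" 1])
qed

lemma P2_diag_le:
  assumes p: "p \<in> {1..n}" shows "Pw n 2 p p \<le> 2"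
proof -
  have "Pw n 2 p p = (\<Sum>l\<in>{1..n}. path_adj n p l * path_adj n l p)"
    unfolding P2_unfold using pow1[OF p] by simp
  also have "\<dots> \<le> (\<Sum>l\<in>{1..n}. 1 * path_adj n l p)"
    by (intro sum_mono mult_right_mono adj_bounds)
  also have "\<dots> \<le> 2" using adj_colsum by simp
  finally show ?thesis .
qed

lemma P2_diag:
  assumes p: "p \<in> {1..n}" shows "Pw n 2 p p = path_adj n p (p - 1) + path_adj n p (p + 1)"
  using pow_rec[OF p p, of 1] pow1[OF p] by (simp add: numeral_2_eq_2)

lemma P2_diag_ge:
  assumes p: "p \<in> {1..n}" and n: "2 \<le> n" shows "1 \<le> Pw n 2 p p"
  using P2_diag[OF p] p n by (auto simp: path_adj_def)

lemma P2_22: "3 \<le> n \<Longrightarrow> Pw n 2 2 2 = 2"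
  using P2_diag[of 2 n] by (simp add: path_adj_def)

lemma diag_upper:
  assumes p: "p \<in> {1..n}"
  shows "Gm n p p \<le> 2 + (exp 2 - (\<Sum>k<4. 2 ^ k / fact k))"
proof -
  have "Gm n p p \<le> (\<Sum>k<4. Pw n k p p / fact k) + (exp 2 - (\<Sum>k<4. 2 ^ k / fact k))"
    unfolding mat_exp_def using pow_le pow_nonneg
    by (intro tail_bound summ) (auto intro: divide_right_mono)
  moreover have "Pw n 1 p p = 0" "Pw n 3 p p = 0" by (auto intro: pow_parity)
  moreover have "Pw n 2 p p \<le> 2" by (rule P2_diag_le[OF p])
  ultimately show ?thesis unfolding sum4 by simp
qed

lemma diag_lower:
  assumes p: "p \<in> {1..n}" and n: "2 \<le> n"
  shows "1 + Pw n 2 p p / 2 \<le> Gm n p p"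
  using Gm_ge_partial[where N=3 and n=n and p=p and q=p] pow_parity[of 1 p p n] unfolding sum3 by simp

lemma S_pos:
  assumes "j \<in> {1..n}" shows "0 < Gm n 1 j"
proof -
  have "0 < Pw n (j - 1) 1 (j - 1 + 1) / fact (j - 1)"
    using pow_pos[of "j - 1" n] assms by (intro divide_pos_pos) auto
  also have "\<dots> = Pw n (j - 1) 1 j / fact (j - 1)" using assms by simp
  also have "\<dots> \<le> (\<Sum>k<j. Pw n k 1 j / fact k)"
    using assms by (intro member_le_sum) (auto intro: divide_nonneg_pos pow_nonneg)
  also have "\<dots> \<le> Gm n 1 j" by (rule Gm_ge_partial)
  finally show ?thesis .
qed

lemma diag_ge: "p \<in> {1..n} \<Longrightarrow> 2 \<le> n \<Longrightarrow> 3/2 \<le> Gm n p p"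
  using diag_lower[of p n] P2_diag_ge[of p n] by simp

lemma step:
  assumes n: "3 \<le> n" and j: "1 \<le> j" "j < n"
  shows "Gm n 1 (j + 1) ^ 2 * Gm n j j \<le> Gm n 1 j ^ 2 * Gm n (j + 1) (j + 1)"
proof (cases "j = 1")
  case True
  have S1l: "3/2 \<le> Gm n 1 1" using diag_ge[of 1 n] n by simp
  have S1u: "Gm n 1 1 \<le> 2" using S1_le n by simp
  have S2u: "Gm n 1 2 \<le> 3/2" using S2_le n by simp
  have G22: "2 \<le> Gm n 2 2" using diag_lower[of 2 n] P2_22[OF n] n by simp
  have S2n: "0 \<le> Gm n 1 2" by (rule Gm_nonneg)
  have "Gm n 1 2 ^ 2 \<le> Gm n 1 1 ^ 2" using S1l S2u S2n by (intro power_mono) auto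
  then have "Gm n 1 2 ^ 2 * Gm n 1 1 \<le> Gm n 1 1 ^ 2 * Gm n 1 1"
    using S1l by (intro mult_right_mono) auto
  also have "\<dots> \<le> Gm n 1 1 ^ 2 * Gm n 2 2"
    using S1u G22 by (intro mult_left_mono) auto
  finally show ?thesis using True by (simp add: numeral_2_eq_2)
next
  case False
  then have j2: "2 \<le> j" using j by simp
  define a where "a = Gm n 1 j"
  define b where "b = Gm n 1 (j + 1)"
  have a0: "0 \<le> a" "0 \<le> b" unfolding a_def b_def by (auto intro: Gm_nonneg)
  have E: "(real j ^ 2 - 1) * b \<le> real j * a" unfolding a_def b_def using j by (intro Gm_E) auto
  have "(3/2) * real j * b \<le> (real j ^ 2 - 1) * b"
  proof (rule mult_right_mono[OF _ a0(2)])
    have "real j \<ge> 2" using j2 by simp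
    then have "0 \<le> (real j - 2) * (real j + 1/2)" by simp
    then show "(3/2) * real j \<le> real j ^ 2 - 1" by (simp add: power2_eq_square algebra_simps)
  qed
  with E have "real j * ((3/2) * b) \<le> real j * a" by (simp add: algebra_simps)
  then have ba: "(3/2) * b \<le> a" using j by (simp add: mult_le_cancel_left_pos)
  then have "((3/2) * b) ^ 2 \<le> a ^ 2" using a0 by (intro power_mono) auto
  moreover have "((3/2) * b) ^ 2 = (9/4) * b ^ 2" by (simp add: power2_eq_square)
  ultimately have b2: "b ^ 2 \<le> (4/9) * a ^ 2" by linarith
  have U: "Gm n j j \<le> 2 + (exp 2 - (\<Sum>k<4. 2 ^ k / fact k))" using j by (intro diag_upper) auto
  have U2: "Gm n j j \<le> 3070/1000"
    using U exp2_le by (simp add: sum4 eval_nat_numeral)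
  have L: "3/2 \<le> Gm n (j + 1) (j + 1)" using j n by (intro diag_ge) auto
  have Gn: "0 \<le> Gm n j j" by (rule Gm_nonneg)
  have "b ^ 2 * Gm n j j \<le> ((4/9) * a ^ 2) * Gm n j j" using b2 Gn by (intro mult_right_mono)
  also have "\<dots> \<le> ((4/9) * a ^ 2) * (3070/1000)" using U2 a0 by (intro mult_left_mono) auto
  also have "\<dots> \<le> a ^ 2 * (3/2)" by simp
  also have "\<dots> \<le> a ^ 2 * Gm n (j + 1) (j + 1)" using L by (intro mult_left_mono) auto
  finally show ?thesis unfolding a_def b_def .
qed

lemma frac_sqrt_mono:
  fixes a b c G G' :: real
  assumes pos: "0 < c" "0 < G" "0 < G'" and ab: "0 \<le> a" "0 \<le> b"
    and main: "b ^ 2 * G \<le> a ^ 2 * G'"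
  shows "b / sqrt (c * G') \<le> a / sqrt (c * G)"
proof (rule power2_le_imp_le)
  show "0 \<le> a / sqrt (c * G)" using pos ab by simp
  have "(b / sqrt (c * G')) ^ 2 = b ^ 2 / (c * G')" using pos by (simp add: power_divide)
  moreover have "(a / sqrt (c * G)) ^ 2 = a ^ 2 / (c * G)" using pos by (simp add: power_divide)
  moreover have "b ^ 2 / (c * G') \<le> a ^ 2 / (c * G)"
  proof -
    have "b ^ 2 * (c * G) \<le> a ^ 2 * (c * G')" using main pos
      by (metis mult.assoc mult.commute mult_left_mono less_imp_le)
    then show ?thesis using pos by (simp add: divide_simps mult.commute mult.left_commute)
  qed
  ultimately show "(b / sqrt (c * G')) ^ 2 \<le> (a / sqrt (c * G)) ^ 2" by simp
qed

definition xx :: "nat \<Rightarrow> nat \<Rightarrow> real" where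
  "xx n j = Gm n 1 j / sqrt (Gm n 1 1 * Gm n j j)"

lemma xx_step:
  assumes n: "3 \<le> n" and j: "1 \<le> j" "j < n"
  shows "xx n (j + 1) \<le> xx n j"
  unfolding xx_def
  using n j by (intro frac_sqrt_mono step S_pos Gm_nonneg order.strict_trans2[OF _ diag_ge]) auto

lemma xx_mono:
  assumes n: "3 \<le> n" and "1 \<le> i" "i \<le> j" "j \<le> n"
  shows "xx n j \<le> xx n i"
  using assms(3,4)
proof (induction j)
  case 0 then show ?case using assms by simp
next
  case (Suc j)
  show ?case
  proof (cases "i = Suc j")
    case False
    then have "i \<le> j" using Suc by simp
    then have "xx n j \<le> xx n i" using Suc by simp
    moreover have "xx n (j + 1) \<le> xx n j" using Suc assms \<open>i \<le> j\<close> by (intro xx_step) auto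
    ultimately show ?thesis by simp
  qed simp
qed

lemma xx_1: "1 \<le> n \<Longrightarrow> xx n 1 = 1"
  unfolding xx_def using S_pos[of 1 n] by (simp add: real_sqrt_mult_self)

lemma xx_nonneg: "0 \<le> xx n j"
  unfolding xx_def by (intro divide_nonneg_nonneg Gm_nonneg real_sqrt_ge_zero mult_nonneg_nonneg)

theorem proposition5p2:
  fixes n :: nat
  shows "(\<forall>i j. 2 \<le> i \<and> i \<le> j \<and> j \<le> n \<longrightarrow>
            path_comm_angle n 1 i \<le> path_comm_angle n 1 j)
       \<or> (\<forall>i j. 2 \<le> i \<and> i \<le> j \<and> j \<le> n \<longrightarrow>
            path_comm_angle n 1 j \<le> path_comm_angle n 1 i)"
proof (rule disjI1, intro allI impI)
  fix i j assume h: "2 \<le> i \<and> i \<le> j \<and> j \<le> n"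
  show "path_comm_angle n 1 i \<le> path_comm_angle n 1 j"
  proof (cases "3 \<le> n")
    case False
    then have "i = j" using h by auto
    then show ?thesis by simp
  next
    case True
    have a: "path_comm_angle n 1 k = arccos (xx n k)" for k
      unfolding path_comm_angle_def xx_def path_comm_def ..
    have "xx n j \<le> xx n i" using h True by (intro xx_mono) auto
    moreover have "xx n i \<le> xx n 1" using h True by (intro xx_mono) auto
    ultimately show ?thesis unfolding a using xx_1[of n] xx_nonneg[of n j] True
      by (intro arccos_le_arccos) auto
  qed
qed

end
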